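(* Let $(X,p)$ be an allocation with prices satisfying: $p(e)=k$ for every $e\in M^+$ and $p(e)=1$ for every $e\in M^-$; $(X,p)$ is an equilibrium with $\alpha_i=1$ for all $i\in N$; and for every MBB path $i_0\to\cdots\to i_s$ ($s\ge1$) and every $e\in X_{i_s}$, $\frac{v_{i_s}(X_{i_s}\setminus\{e\})}{w_{i_s}}\le\frac{v_{i_0}(X_{i_0})}{w_{i_0}}$. Define agent groups as follows: set $N'=N$, $R=0$; while $N'\neq\emptyset$, let $\ell\in\arg\min_{i\in N'}v_i(X_i)/w_i$ (smallest index on ties), increase $R$ by $1$, let $N_R$ be the set of agents of $N'$ reachable from $\ell$ by a directed path in the MBB graph (including $\ell$), and set $N'\leftarrow N'\setminus N_R$. Then: (1) for all $i\in N_r$, $j\in N_{r'}$ with $r<r'$, we have $v_i(e)=1$ for every $e\in X_j$; (2) $M^-\subseteq\bigcup_{i\in N_1}X_i$; (3) for every $r$, the group $N_r$ is WEQX: for all $i,j\in N_r$ and $e\in X_j$, $\frac{v_i(X_i)}{w_i}\ge\frac{v_j(X_j\setminus\{e\})}{w_j}$.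
   Context: Bivalued instance: agents $N$, goods $M$, additive valuations with $v_i(e)\in\{1,k\}$, $k>1$, weights $w_i>0$ summing to $1$. $M^-=\{e\in M:v_i(e)=1\ \forall i\in N\}$ and $M^+=M\setminus M^-$. Prices $p(e)>0$; $\alpha_{i,e}=v_i(e)/p(e)$, $\alpha_i=\max_e\alpha_{i,e}$, $\mathrm{MBB}_i=\{e:\alpha_{i,e}=\alpha_i\}$; $(X,p)$ is an equilibrium if $X_i\subseteq\mathrm{MBB}_i$ for all $i$. The MBB graph is the directed graph on $N$ with edge $i\to j$ iff $\mathrm{MBB}_i\cap X_j\ne\emptyset$. *)

theory Defs
  imports Complex_Main
begin

text \<open>Agents are natural numbers (so that "smallest index" makes sense); goods have an arbitrary type.\<close>

definition val :: "(nat \<Rightarrow> 'g \<Rightarrow> real) \<Rightarrow> nat \<Rightarrow> 'g set \<Rightarrow> real" where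
  "val v i S = (\<Sum>e\<in>S. v i e)"

definition Mminus :: "nat set \<Rightarrow> 'g set \<Rightarrow> (nat \<Rightarrow> 'g \<Rightarrow> real) \<Rightarrow> 'g set" where
  "Mminus N M v = {e \<in> M. \<forall>i\<in>N. v i e = 1}"

definition Mplus :: "nat set \<Rightarrow> 'g set \<Rightarrow> (nat \<Rightarrow> 'g \<Rightarrow> real) \<Rightarrow> 'g set" where
  "Mplus N M v = M - Mminus N M v"

definition alpha :: "'g set \<Rightarrow> (nat \<Rightarrow> 'g \<Rightarrow> real) \<Rightarrow> ('g \<Rightarrow> real) \<Rightarrow> nat \<Rightarrow> real" where
  "alpha M v p i = Max ((\<lambda>e. v i e / p e) ` M)"

definition MBB :: "'g set \<Rightarrow> (nat \<Rightarrow> 'g \<Rightarrow> real) \<Rightarrow> ('g \<Rightarrow> real) \<Rightarrow> nat \<Rightarrow> 'g set" where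
  "MBB M v p i = {e \<in> M. v i e / p e = alpha M v p i}"

definition equilibrium :: "nat set \<Rightarrow> 'g set \<Rightarrow> (nat \<Rightarrow> 'g \<Rightarrow> real) \<Rightarrow> ('g \<Rightarrow> real) \<Rightarrow> (nat \<Rightarrow> 'g set) \<Rightarrow> bool" where
  "equilibrium N M v p X \<longleftrightarrow> (\<forall>i\<in>N. X i \<subseteq> MBB M v p i)"

definition mbb_edges :: "nat set \<Rightarrow> 'g set \<Rightarrow> (nat \<Rightarrow> 'g \<Rightarrow> real) \<Rightarrow> ('g \<Rightarrow> real) \<Rightarrow> (nat \<Rightarrow> 'g set) \<Rightarrow> (nat \<times> nat) set" where
  "mbb_edges N M v p X = {(i, j). i \<in> N \<and> j \<in> N \<and> MBB M v p i \<inter> X j \<noteq> {}}"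

text \<open>Group construction.  f is the key v_i(X_i)/w_i, E the edge relation.\<close>
definition leader :: "(nat \<Rightarrow> real) \<Rightarrow> nat set \<Rightarrow> nat" where
  "leader f S = (LEAST l. l \<in> S \<and> (\<forall>i\<in>S. f l \<le> f i))"

definition reach_group :: "(nat \<times> nat) set \<Rightarrow> (nat \<Rightarrow> real) \<Rightarrow> nat set \<Rightarrow> nat set" where
  "reach_group E f S = {j \<in> S. (leader f S, j) \<in> E\<^sup>*}"

primrec remaining :: "(nat \<times> nat) set \<Rightarrow> (nat \<Rightarrow> real) \<Rightarrow> nat set \<Rightarrow> nat \<Rightarrow> nat set" where
  "remaining E f N0 0 = N0"
| "remaining E f N0 (Suc r) = remaining E f N0 r - reach_group E f (remaining E f N0 r)"

text \<open>Groups are 1-indexed as in the paper: group r (r >= 1) is built in round r.\<close>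
definition agent_group :: "(nat \<times> nat) set \<Rightarrow> (nat \<Rightarrow> real) \<Rightarrow> nat set \<Rightarrow> nat \<Rightarrow> nat set" where
  "agent_group E f N0 r = (if r = 0 then {} else reach_group E f (remaining E f N0 (r - 1)))"

definition num_groups :: "(nat \<times> nat) set \<Rightarrow> (nat \<Rightarrow> real) \<Rightarrow> nat set \<Rightarrow> nat" where
  "num_groups E f N0 = (LEAST R. remaining E f N0 R = {})"

end

theory Submission
  imports Defs
begin

lemma leader_prop:
  fixes f :: "nat \<Rightarrow> real"
  assumes "finite S" "S \<noteq> {}"
  shows "leader f S \<in> S \<and> (\<forall>i\<in>S. f (leader f S) \<le> f i)"
proof -
  obtain m where m: "m \<in> S" "\<forall>i\<in>S. f m \<le> f i"
  proof -
    have "Min (f ` S) \<in> f ` S" using assms by simp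
    then obtain m where "m \<in> S" "f m = Min (f ` S)" by auto
    moreover have "\<forall>i\<in>S. f m \<le> f i" using assms calculation by simp
    ultimately show ?thesis using that by blast
  qed
  show ?thesis unfolding leader_def
    by (rule LeastI[of "\<lambda>l. l \<in> S \<and> (\<forall>i\<in>S. f l \<le> f i)" m]) (use m in blast)
qed

lemma rem_sub: "remaining E f N0 r \<subseteq> N0"
  by (induction r) auto

lemma rem_mono: "r \<le> r' \<Longrightarrow> remaining E f N0 r' \<subseteq> remaining E f N0 r"
proof (induction r' rule: dec_induct)
  case base then show ?case by simp
next
  case (step n) then show ?case by auto
qed

theorem lemma4p2:
  fixes N :: "nat set" and M :: "'g set" and v :: "nat \<Rightarrow> 'g \<Rightarrow> real"
    and k :: real and w :: "nat \<Rightarrow> real" and p :: "'g \<Rightarrow> real" and X :: "nat \<Rightarrow> 'g set"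
  assumes finN: "finite N" and finM: "finite M"
    and k_gt: "k > 1"
    and bival: "\<forall>i\<in>N. \<forall>e\<in>M. v i e = 1 \<or> v i e = k"
    and w_pos: "\<forall>i\<in>N. w i > 0" and w_sum: "(\<Sum>i\<in>N. w i) = 1"
    and X_sub: "\<forall>i\<in>N. X i \<subseteq> M"
    and X_disj: "\<forall>i\<in>N. \<forall>j\<in>N. i \<noteq> j \<longrightarrow> X i \<inter> X j = {}"
    and X_cover: "(\<Union>i\<in>N. X i) = M"
    and p_plus: "\<forall>e\<in>Mplus N M v. p e = k"
    and p_minus: "\<forall>e\<in>Mminus N M v. p e = 1"
    and eq: "equilibrium N M v p X"
    and alpha1: "\<forall>i\<in>N. alpha M v p i = 1"
    and path_cond: "\<forall>i0 is. (i0, is) \<in> (mbb_edges N M v p X)\<^sup>+ \<longrightarrow>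
        (\<forall>e\<in>X is. val v is (X is - {e}) / w is \<le> val v i0 (X i0) / w i0)"
  defines "E \<equiv> mbb_edges N M v p X"
    and "f \<equiv> (\<lambda>i. val v i (X i) / w i)"
  shows "(\<forall>r r'. 1 \<le> r \<and> r < r' \<and> r' \<le> num_groups E f N \<longrightarrow>
            (\<forall>i\<in>agent_group E f N r. \<forall>j\<in>agent_group E f N r'. \<forall>e\<in>X j. v i e = 1))
       \<and> Mminus N M v \<subseteq> (\<Union>i\<in>agent_group E f N 1. X i)
       \<and> (\<forall>r. 1 \<le> r \<and> r \<le> num_groups E f N \<longrightarrow>
            (\<forall>i\<in>agent_group E f N r. \<forall>j\<in>agent_group E f N r. \<forall>e\<in>X j.
               val v i (X i) / w i \<ge> val v j (X j - {e}) / w j))"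
proof (intro conjI allI impI ballI subsetI)
  have edge: "(i, j) \<in> E" if "i \<in> N" "j \<in> N" "e \<in> X j" "e \<in> MBB M v p i" for i j e
    using that unfolding E_def mbb_edges_def by blast
  have mbb_k: "e \<in> MBB M v p i" if "i \<in> N" "e \<in> M" "v i e = k" for i e
  proof -
    have "e \<notin> Mminus N M v"
    proof
      assume "e \<in> Mminus N M v"
      then have "\<forall>j\<in>N. v j e = 1" unfolding Mminus_def by simp
      then have "v i e = 1" using that(1) by blast
      then show False using that(3) k_gt by linarith
    qed
    then have "e \<in> Mplus N M v" using that unfolding Mplus_def by blast
    then have "p e = k" using p_plus by auto
    then show ?thesis using that alpha1 k_gt unfolding MBB_def by auto
  qed
  have mbb_m: "e \<in> MBB M v p i" if "i \<in> N" "e \<in> Mminus N M v" for i e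
  proof -
    have "p e = 1" using that(2) p_minus by blast
    moreover have "v i e = 1" "e \<in> M" using that unfolding Mminus_def by blast+
    ultimately have "v i e / p e = 1" "e \<in> M" by simp_all
    moreover have "alpha M v p i = 1" using alpha1 that(1) by blast
    ultimately show ?thesis unfolding MBB_def by simp
  qed
  have finR: "finite (remaining E f N r)" for r by (rule finite_subset[OF rem_sub finN])
  {
    fix r r' i j e
    assume rr: "1 \<le> r \<and> r < r' \<and> r' \<le> num_groups E f N"
      and i: "i \<in> agent_group E f N r" and j: "j \<in> agent_group E f N r'" and e: "e \<in> X j"
    let ?S = "remaining E f N (r - 1)"
    have r0: "r \<noteq> 0" "r' \<noteq> 0" using rr by auto
    have iS: "i \<in> ?S" and li: "(leader f ?S, i) \<in> E\<^sup>*"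
      using i r0 unfolding agent_group_def reach_group_def by simp_all
    have jS': "j \<in> remaining E f N (r' - 1)"
      using j r0 unfolding agent_group_def reach_group_def by simp
    have "remaining E f N (r' - 1) \<subseteq> remaining E f N r" using rr by (intro rem_mono) linarith
    also have "remaining E f N r = ?S - reach_group E f ?S"
    proof -
      have "r = Suc (r - 1)" using r0 by simp
      then show ?thesis by (metis remaining.simps(2))
    qed
    finally have jS: "j \<in> ?S" "j \<notin> reach_group E f ?S" using jS' by blast+
    have iN: "i \<in> N" and jN: "j \<in> N" using iS jS rem_sub[of E f N] by blast+
    have eM: "e \<in> M" using e jN X_sub by auto
    show "v i e = 1"
    proof (rule ccontr)
      assume "v i e \<noteq> 1"
      moreover have "v i e = 1 \<or> v i e = k" using bival iN eM by blast
      ultimately have "v i e = k" by blast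
      then have "(i, j) \<in> E" using edge mbb_k iN jN e eM by blast
      then have "(leader f ?S, j) \<in> E\<^sup>*" using rtrancl_into_rtrancl[OF li] by blast
      then have "j \<in> reach_group E f ?S" using jS(1) unfolding reach_group_def by blast
      then show False using jS(2) by blast
    qed
  }
  {
    fix e assume e: "e \<in> Mminus N M v"
    then have "e \<in> M" unfolding Mminus_def by blast
    then obtain j where j: "j \<in> N" "e \<in> X j" using X_cover by blast
    have "leader f N \<in> N" using leader_prop[OF finN, of f] j by blast
    then have "(leader f N, j) \<in> E" using edge mbb_m j e by blast
    then have "(leader f N, j) \<in> E\<^sup>*" by blast
    then have "j \<in> agent_group E f N 1"
      using j unfolding agent_group_def reach_group_def by simp
    then show "e \<in> (\<Union>i\<in>agent_group E f N 1. X i)" using j by blast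
  }
  {
    fix r i j e
    assume rr: "1 \<le> r \<and> r \<le> num_groups E f N"
      and i: "i \<in> agent_group E f N r" and j: "j \<in> agent_group E f N r" and e: "e \<in> X j"
    let ?S = "remaining E f N (r - 1)"
    let ?l = "leader f ?S"
    have iS: "i \<in> ?S" and jS: "j \<in> ?S" and lj: "(?l, j) \<in> E\<^sup>*"
      using i j rr unfolding agent_group_def reach_group_def by auto
    have L: "?l \<in> ?S" "\<forall>x\<in>?S. f ?l \<le> f x" using leader_prop[OF finR, of "r-1" f] iS by auto
    have jN: "j \<in> N" using jS rem_sub[of E f N] by blast
    have "val v j (X j - {e}) / w j \<le> f ?l"
    proof (cases "?l = j")
      case True
      have fin: "finite (X j)" using X_sub jN finM finite_subset by blast
      have nn: "\<forall>x\<in>X j. 0 \<le> v j x"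
      proof
        fix x assume "x \<in> X j"
        then have "x \<in> M" using X_sub jN by blast
        then have "v j x = 1 \<or> v j x = k" using bival jN by blast
        then show "0 \<le> v j x" using k_gt by auto
      qed
      have "val v j (X j - {e}) \<le> val v j (X j)"
        unfolding val_def by (rule sum_mono2[OF fin]) (use nn in auto)
      moreover have "w j > 0" using w_pos jN by blast
      ultimately have "val v j (X j - {e}) / w j \<le> val v j (X j) / w j"
        by (simp add: divide_right_mono)
      then show ?thesis using True unfolding f_def by simp
    next
      case False
      then have "(?l, j) \<in> E\<^sup>+" using lj by (meson rtranclD)
      then show ?thesis using path_cond e unfolding E_def f_def by blast
    qed
    also have "\<dots> \<le> f i" using L iS by auto
    finally show "val v i (X i) / w i \<ge> val v j (X j - {e}) / w j" unfolding f_def by simp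
  }
qed

end
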